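(* Let $A \in \mathbb{R}^{m \times r}$ and $B \in \mathbb{R}^{r \times n}$, and for $\kappa\in\mathbb{R}^r_+$ let $f_\kappa\colon\mathbb{R}^n_+\to\mathbb{R}^m$, $f_\kappa(x)=A_\kappa x^B$. The following are equivalent: (i) $f_\kappa$ is injective on $\mathbb{R}^n_+$ for all $\kappa\in\mathbb{R}^r_+$; (ii) $\ker(B)=\{0\}$ and $\sigma(\ker(A)) \cap \sigma(\mathrm{im}(B)) = \{0\}$.
   Context: $\mathbb{R}_+$ denotes the strictly positive reals. $(x^B)_j=\prod_i x_i^{b_{ji}}$ (real exponents), $A_\kappa=A\,\mathrm{diag}(\kappa)$. $\sigma$ denotes the componentwise sign vector in $\{-,0,+\}^k$, $\sigma(T)=\{\sigma(x)\mid x\in T\}$, and $0$ in (ii) denotes the zero sign vector. *)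

theory Defs
  imports "HOL-Analysis.Analysis"
begin

definition monomial_map :: "real^'n^'r \<Rightarrow> real^'n \<Rightarrow> real^'r" where
  "monomial_map B x = (\<chi> j. \<Prod>i\<in>UNIV. (x $ i) powr (B $ j $ i))"

text \<open>f_kappa(x) = A diag(kappa) x^B.\<close>
definition gen_mass_action :: "real^'r^'m \<Rightarrow> real^'n^'r \<Rightarrow> real^'r \<Rightarrow> real^'n \<Rightarrow> real^'m" where
  "gen_mass_action A B \<kappa> x = A *v (\<chi> j. \<kappa> $ j * monomial_map B x $ j)"

definition pos_orthant :: "(real^'k) set" where
  "pos_orthant = {x. \<forall>i. 0 < x $ i}"

definition sign_vec :: "real^'k \<Rightarrow> real^'k" where
  "sign_vec v = (\<chi> i. sgn (v $ i))"

definition mat_ker :: "real^'c^'l \<Rightarrow> (real^'c) set" where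
  "mat_ker M = {v. M *v v = 0}"

definition mat_im :: "real^'c^'l \<Rightarrow> (real^'l) set" where
  "mat_im M = range (\<lambda>v. M *v v)"

end

theory Submission
  imports Defs
begin

definition lnv :: "real^'k \<Rightarrow> real^'k" where "lnv x = (\<chi> i. ln (x $ i))"
definition expv :: "real^'k \<Rightarrow> real^'k" where "expv z = (\<chi> i. exp (z $ i))"

lemma expv_pos: "expv z \<in> pos_orthant"
  by (simp add: expv_def pos_orthant_def)

lemma lnv_expv: "lnv (expv z) = z"
  by (simp add: expv_def lnv_def vec_eq_iff)

lemma expv_lnv: "x \<in> pos_orthant \<Longrightarrow> expv (lnv x) = x"
  by (simp add: expv_def lnv_def vec_eq_iff pos_orthant_def)

lemma mono_exp:
  assumes "x \<in> pos_orthant"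
  shows "monomial_map B x = (\<chi> j. exp ((B *v lnv x) $ j))"
proof -
  have p: "\<forall>i. 0 < x$i" using assms by (simp add: pos_orthant_def)
  show ?thesis
  proof (simp add: monomial_map_def vec_eq_iff, intro allI)
    fix j
    have "(\<Prod>i\<in>UNIV. x $ i powr B $ j $ i) = (\<Prod>i\<in>UNIV. exp (B $ j $ i * ln (x $ i)))"
      using p by (intro prod.cong) (auto simp: powr_def mult.commute dest: less_imp_neq[symmetric])
    also have "\<dots> = exp (\<Sum>i\<in>UNIV. B $ j $ i * ln (x $ i))"
      by (simp add: exp_sum)
    also have "\<dots> = exp ((B *v lnv x) $ j)"
      by (simp add: matrix_vector_mult_def lnv_def)
    finally show "(\<Prod>i\<in>UNIV. x $ i powr B $ j $ i) = exp ((B *v lnv x) $ j)" .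
  qed
qed

lemma diff_f:
  assumes "x \<in> pos_orthant" "y \<in> pos_orthant"
  shows "gen_mass_action A B \<kappa> x - gen_mass_action A B \<kappa> y
    = A *v (\<chi> j. \<kappa>$j * (exp ((B *v lnv x) $ j) - exp ((B *v lnv y) $ j)))"
proof -
  have "gen_mass_action A B \<kappa> x - gen_mass_action A B \<kappa> y
     = A *v ((\<chi> j. \<kappa> $ j * exp ((B *v lnv x) $ j)) - (\<chi> j. \<kappa> $ j * exp ((B *v lnv y) $ j)))"
    unfolding gen_mass_action_def mono_exp[OF assms(1)] mono_exp[OF assms(2)]
    by (simp add: matrix_vector_mult_diff_distrib)
  also have "(\<chi> j. \<kappa> $ j * exp ((B *v lnv x) $ j)) - (\<chi> j. \<kappa> $ j * exp ((B *v lnv y) $ j))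
     = (\<chi> j. \<kappa>$j * (exp ((B *v lnv x) $ j) - exp ((B *v lnv y) $ j)))"
    by (simp add: vec_eq_iff algebra_simps)
  finally show ?thesis .
qed

lemma sgn_exp_diff: "k > 0 \<Longrightarrow> sgn (k * (exp a - exp b)) = sgn (a - (b::real))"
proof -
  assume k: "k > 0"
  have "sgn (exp a - exp b) = sgn (a - b)"
    by (cases "a < b"; cases "a = b") (auto simp: sgn_if)
  then show ?thesis using k by (simp add: sgn_mult)
qed

lemma sign_vec_zero: "sign_vec u = 0 \<longleftrightarrow> u = 0"
  by (simp add: sign_vec_def vec_eq_iff sgn_0_0)

lemma pos_div: "sgn a = sgn b \<Longrightarrow> b \<noteq> 0 \<Longrightarrow> a / (exp b - 1) > (0::real)"
  by (cases "b > 0") (auto simp: sgn_if split: if_splits intro!: divide_pos_pos divide_neg_neg)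

theorem mainTheorem9:
  fixes A :: "real^'r^'m" and B :: "real^'n^'r"
  shows "(\<forall>\<kappa>\<in>pos_orthant. inj_on (gen_mass_action A B \<kappa>) pos_orthant)
    \<longleftrightarrow> (mat_ker B = {0} \<and> sign_vec ` mat_ker A \<inter> sign_vec ` mat_im B = {0})"
proof
  assume H: "\<forall>\<kappa>\<in>pos_orthant. inj_on (gen_mass_action A B \<kappa>) pos_orthant"
  have one: "((\<chi> i. 1)::real^'r) \<in> pos_orthant" by (simp add: pos_orthant_def)
  have kB: "mat_ker B = {0}"
  proof
    show "mat_ker B \<subseteq> {0}"
    proof
      fix z assume z: "z \<in> mat_ker B"
      have "gen_mass_action A B ((\<chi> i. 1)::real^'r) (expv z) - gen_mass_action A B (\<chi> i. 1) (expv 0) = 0"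
        using z by (simp add: diff_f expv_pos lnv_expv mat_ker_def zero_vec_def[symmetric])
      then have "expv z = expv 0"
        using H one expv_pos by (auto dest: inj_onD)
      then have "lnv (expv z) = lnv (expv 0)" by simp
      then show "z \<in> {0}" by (simp add: lnv_expv)
    qed
  qed (simp add: mat_ker_def)
  have "sign_vec ` mat_ker A \<inter> sign_vec ` mat_im B \<subseteq> {0}"
  proof
    fix s assume "s \<in> sign_vec ` mat_ker A \<inter> sign_vec ` mat_im B"
    then obtain v w where v: "A *v v = 0" and sv: "s = sign_vec v" and sw: "s = sign_vec (B *v w)"
      by (auto simp: mat_ker_def mat_im_def)
    define u where "u = B *v w"
    have sg: "\<And>j. sgn (v$j) = sgn (u$j)" using sv sw
      by (simp add: u_def sign_vec_def vec_eq_iff)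
    show "s \<in> {0}"
    proof (rule ccontr)
      assume "s \<notin> {0}"
      then have u0: "u \<noteq> 0" using sw sign_vec_zero u_def by auto
      define \<kappa> where "\<kappa> = (\<chi> j. if u$j = 0 then 1 else v$j / (exp (u$j) - 1))"
      have kp: "\<kappa> \<in> pos_orthant"
        using sg pos_div by (simp add: \<kappa>_def pos_orthant_def)
      have kv: "(\<chi> j. \<kappa>$j * (exp (u $ j) - exp ((B *v 0) $ j))) = v"
      proof (simp add: vec_eq_iff, intro allI)
        fix j
        show "\<kappa> $ j * (exp (u $ j) - 1) = v $ j"
        proof (cases "u$j = 0")
          case True then show ?thesis using sg[of j] by (simp add: \<kappa>_def sgn_0_0)
        next
          case False then have "exp (u$j) - 1 \<noteq> 0" by simp
          then show ?thesis using False by (simp add: \<kappa>_def)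
        qed
      qed
      have "gen_mass_action A B \<kappa> (expv w) - gen_mass_action A B \<kappa> (expv 0) = 0"
        using v kv by (simp add: diff_f expv_pos lnv_expv u_def)
      then have "expv w = expv 0"
        using H kp expv_pos by (auto dest: inj_onD)
      then have "lnv (expv w) = lnv (expv 0)" by simp
      then have "w = 0" by (simp add: lnv_expv)
      then show False using u0 u_def by simp
    qed
  qed
  moreover have "0 \<in> sign_vec ` mat_ker A \<inter> sign_vec ` mat_im B"
  proof -
    have "sign_vec (0::real^'r) = 0" using sign_vec_zero by blast
    moreover have "(0::real^'r) \<in> mat_ker A" by (simp add: mat_ker_def)
    moreover have "(0::real^'r) \<in> mat_im B" unfolding mat_im_def
      by (rule range_eqI[of _ _ 0]) simp
    ultimately show ?thesis by (metis IntI image_eqI)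
  qed
  ultimately show "mat_ker B = {0} \<and> sign_vec ` mat_ker A \<inter> sign_vec ` mat_im B = {0}"
    using kB by blast
next
  assume "mat_ker B = {0} \<and> sign_vec ` mat_ker A \<inter> sign_vec ` mat_im B = {0}"
  then have kB: "mat_ker B = {0}" and S: "sign_vec ` mat_ker A \<inter> sign_vec ` mat_im B = {0}"
    by auto
  show "\<forall>\<kappa>\<in>pos_orthant. inj_on (gen_mass_action A B \<kappa>) pos_orthant"
  proof (intro ballI inj_onI)
    fix \<kappa> x y assume kp: "\<kappa> \<in> pos_orthant" and x: "x \<in> pos_orthant" and y: "y \<in> pos_orthant"
      and eq: "gen_mass_action A B \<kappa> x = gen_mass_action A B \<kappa> y"
    define v where "v = (\<chi> j. \<kappa>$j * (exp ((B *v lnv x) $ j) - exp ((B *v lnv y) $ j)))"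
    define u where "u = B *v (lnv x - lnv y)"
    have Av: "A *v v = 0" using diff_f[OF x y, of A B \<kappa>] eq by (simp add: v_def)
    have "sign_vec v = sign_vec u"
      using kp sgn_exp_diff
      by (simp add: v_def u_def sign_vec_def vec_eq_iff matrix_vector_mult_diff_distrib pos_orthant_def)
    moreover have "u \<in> mat_im B" by (simp add: u_def mat_im_def)
    moreover have "v \<in> mat_ker A" using Av by (simp add: mat_ker_def)
    ultimately have "sign_vec u \<in> sign_vec ` mat_ker A \<inter> sign_vec ` mat_im B" by (metis IntI image_eqI)
    then have "u = 0" using S sign_vec_zero by auto
    then have "lnv x - lnv y \<in> mat_ker B" by (simp add: u_def mat_ker_def)
    then have "lnv x = lnv y" using kB by simp
    then show "x = y" using expv_lnv[OF x] expv_lnv[OF y] by metis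
  qed
qed

end
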